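(* Let $M_1,M_2\in\mathbb{Z}^{r\times n}$, let $\mathcal{F}$ be the set of characteristic vectors $x\in\{0,1\}^n$ of $r$-subsets of $\{1,\dots,n\}$ that are bases of both vectorial matroids represented by $M_1$ and $M_2$ (i.e., the $r\times r$ column submatrices $M_1^x$ and $M_2^x$ indexed by the support of $x$ are both nonsingular), and let $W\in\mathbb{Z}_+^{d\times n}$. For $u\in\mathbb{Z}^d_+$ define the polynomial $g_u(a):=\sum\{\det(M_1^x)\det(M_2^x)\,a^x : x\in\mathcal{F},\ Wx=u\}$ in variables $a=(a_1,\dots,a_n)$, where $a^x=\prod_j a_j^{x_j}$, and let $U:=\{Wx:x\in\mathcal{F}\}$. Suppose independent random variables uniformly distributed on $\{1,2,\dots,s\}$ are substituted for $a_1,\dots,a_n$, and let $\widehat U:=\{u\in U: g_u(a)\ne0\}$. Then for every $u\in U$, the probability that $u\notin\widehat U$ is at most $r/s$.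
   Context: $\widehat U$ equals the support (set of exponent vectors with nonzero coefficient) of the polynomial $\det(M_1(\gamma)M_2^{\top})=\sum_{u\in U}g_u(a)b^u$ in variables $b=(b_1,\dots,b_d)$, where $M_1(\gamma)$ is the matrix whose $j$-th column is the $j$-th column of $M_1$ multiplied by $\gamma_j=a_j\prod_{i=1}^d b_i^{W_{i,j}}$. *)

theory Defs
  imports "Jordan_Normal_Form.Determinant"
begin

text \<open>Column submatrix of M indexed by the set S of column indices (columns taken in
increasing order). For S of size r and M with r rows this is the r x r matrix M^x.\<close>
definition colsub :: "'a mat \<Rightarrow> nat set \<Rightarrow> 'a mat" where
  "colsub M S = mat (dim_row M) (card S) (\<lambda>(i,j). M $$ (i, sorted_list_of_set S ! j))"

text \<open>The family F, represented by supports S of the characteristic vectors x: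
r-subsets of {0..<n} that are bases of both matroids.\<close>
definition common_bases :: "int mat \<Rightarrow> int mat \<Rightarrow> nat set set" where
  "common_bases M1 M2 = {S. S \<subseteq> {0..<dim_col M1} \<and> card S = dim_row M1 \<and>
      det (colsub M1 S) \<noteq> 0 \<and> det (colsub M2 S) \<noteq> 0}"

text \<open>W x for the characteristic vector x of S, W a d x n matrix over nat.\<close>
definition Wvec :: "nat \<Rightarrow> (nat \<Rightarrow> nat \<Rightarrow> nat) \<Rightarrow> nat set \<Rightarrow> nat list" where
  "Wvec d W S = map (\<lambda>i. \<Sum>j\<in>S. W i j) [0..<d]"

definition g_eval :: "int mat \<Rightarrow> int mat \<Rightarrow> nat \<Rightarrow> (nat \<Rightarrow> nat \<Rightarrow> nat) \<Rightarrow> nat list \<Rightarrow> (nat \<Rightarrow> int) \<Rightarrow> int" where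
  "g_eval M1 M2 d W u a = (\<Sum>S\<in>{S \<in> common_bases M1 M2. Wvec d W S = u}.
      det (colsub M1 S) * det (colsub M2 S) * (\<Prod>j\<in>S. a j))"

end

theory Submission
  imports Defs
begin

lemma card_PiE_insert_filter:
  assumes "finite V" "x \<notin> V" "finite A"
  shows "card {a \<in> PiE (insert x V) (\<lambda>_. A). Q a} =
         (\<Sum>b\<in>PiE V (\<lambda>_. A). card {y\<in>A. Q (b(x:=y))})"
proof -
  let ?S = "SIGMA b:PiE V (\<lambda>_. A). {y\<in>A. Q (b(x:=y))}"
  let ?f = "\<lambda>(b,y). b(x:=y)"
  have eq: "{a \<in> PiE (insert x V) (\<lambda>_. A). Q a} = ?f ` ?S"
  proof (intro equalityI subsetI)
    fix a assume a: "a \<in> {a \<in> PiE (insert x V) (\<lambda>_. A). Q a}"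
    have "(a(x:=undefined), a x) \<in> ?S" using a assms(2) by (auto simp: PiE_iff)
    moreover have "a = ?f (a(x:=undefined), a x)" by auto
    ultimately show "a \<in> ?f ` ?S" by blast
  next
    fix a assume "a \<in> ?f ` ?S"
    then show "a \<in> {a \<in> PiE (insert x V) (\<lambda>_. A). Q a}"
      using assms(2) by (auto simp: PiE_iff)
  qed
  have inj: "inj_on ?f ?S"
  proof (rule inj_onI)
    fix p q assume hp: "p \<in> ?S" "q \<in> ?S" "?f p = ?f q"
    obtain b1 y1 b2 y2 where pq: "p = (b1,y1)" "q = (b2,y2)" by (cases p, cases q) auto
    have h: "(b1, y1) \<in> ?S" "(b2, y2) \<in> ?S" "b1(x:=y1) = b2(x:=y2)" using hp pq by auto
    have "y1 = y2" using fun_cong[OF h(3), of x] by simp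
    moreover have "b1 = b2"
    proof (rule ext)
      fix j show "b1 j = b2 j"
      proof (cases "j = x")
        case True then show ?thesis using h(1,2) assms(2) by (auto simp: PiE_iff extensional_def)
      next
        case False then show ?thesis using fun_cong[OF h(3), of j] by simp
      qed
    qed
    ultimately show "p = q" using pq by simp
  qed
  have "card {a \<in> PiE (insert x V) (\<lambda>_. A). Q a} = card ?S"
    unfolding eq by (rule card_image[OF inj])
  also have "\<dots> = (\<Sum>b\<in>PiE V (\<lambda>_. A). card {y\<in>A. Q (b(x:=y))})"
    by (rule card_SigmaI) (use assms in \<open>auto intro: finite_PiE\<close>)
  finally show ?thesis .
qed

lemma sum_if_const_card:
  assumes "finite S"
  shows "(\<Sum>x\<in>S. if P x then k else 0) = card {x\<in>S. P x} * (k::nat)"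
proof -
  have "(\<Sum>x\<in>S. if P x then k else 0) = (\<Sum>x\<in>{x\<in>S. P x}. k)"
    using sum.inter_filter[OF assms, of "\<lambda>_. k" P] by simp
  then show ?thesis by simp
qed

lemma sz:
  fixes A :: "int set" and V :: "nat set"
  assumes "finite V" "finite A"
  shows "F \<subseteq> Pow V \<Longrightarrow> F \<noteq> {} \<Longrightarrow> (\<forall>S\<in>F. card S \<le> r) \<Longrightarrow> (\<forall>S\<in>F. c S \<noteq> 0) \<Longrightarrow>
    card {a \<in> PiE V (\<lambda>_. A). (\<Sum>S\<in>F. c S * (\<Prod>j\<in>S. a j)) = 0} * card A \<le> r * card A ^ card V"
  using assms(1)
proof (induction V arbitrary: F c r rule: finite_induct)
  case empty
  then have "F = {{}}" by auto
  then show ?case using empty by simp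
next
  case (insert x V)
  define F0 where "F0 = {S\<in>F. x \<notin> S}"
  define F1 where "F1 = {S\<in>F. x \<in> S}"
  define G where "G = (\<lambda>S. S - {x}) ` F1"
  define d where "d T = c (insert x T)" for T
  define Q0 where "Q0 b = (\<Sum>S\<in>F0. c S * (\<Prod>j\<in>S. b j))" for b :: "nat \<Rightarrow> int"
  define Q1 where "Q1 b = (\<Sum>T\<in>G. d T * (\<Prod>j\<in>T. b j))" for b :: "nat \<Rightarrow> int"
  have finF: "finite F" using insert.prems(1) insert.hyps(1)
    by (meson finite_Pow_iff finite_insert rev_finite_subset)
  have finS: "finite S" if "S \<in> F" for S
    using that insert.prems(1) insert.hyps(1) by (meson PowD finite_insert finite_subset subsetD)
  have injG: "inj_on (\<lambda>S. S - {x}) F1"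
  proof (rule inj_onI)
    fix S T assume "S \<in> F1" "T \<in> F1" "S - {x} = T - {x}"
    then show "S = T" unfolding F1_def by (metis (mono_tags, lifting) insert_Diff mem_Collect_eq)
  qed
  have key: "(\<Sum>S\<in>F. c S * (\<Prod>j\<in>S. (b(x:=y)) j)) = Q0 b + y * Q1 b" for b y
  proof -
    have FU: "F = F0 \<union> F1" "F0 \<inter> F1 = {}" by (auto simp: F0_def F1_def)
    have "(\<Sum>S\<in>F. c S * (\<Prod>j\<in>S. (b(x:=y)) j)) =
          (\<Sum>S\<in>F0. c S * (\<Prod>j\<in>S. (b(x:=y)) j)) + (\<Sum>S\<in>F1. c S * (\<Prod>j\<in>S. (b(x:=y)) j))"
      using finF FU by (metis finite_Un sum.union_disjoint)
    also have "(\<Sum>S\<in>F0. c S * (\<Prod>j\<in>S. (b(x:=y)) j)) = Q0 b"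
      unfolding Q0_def
    proof (rule sum.cong[OF refl])
      fix S assume "S \<in> F0"
      then have "x \<notin> S" by (simp add: F0_def)
      then have "(\<Prod>j\<in>S. (b(x:=y)) j) = (\<Prod>j\<in>S. b j)" by (intro prod.cong) auto
      then show "c S * (\<Prod>j\<in>S. (b(x:=y)) j) = c S * (\<Prod>j\<in>S. b j)" by simp
    qed
    also have "(\<Sum>S\<in>F1. c S * (\<Prod>j\<in>S. (b(x:=y)) j)) = (\<Sum>S\<in>F1. y * (c S * (\<Prod>j\<in>S-{x}. b j)))"
    proof (rule sum.cong[OF refl])
      fix S assume S: "S \<in> F1"
      then have xS: "x \<in> S" and fS: "finite S" using finS by (auto simp: F1_def)
      have "(\<Prod>j\<in>S. (b(x:=y)) j) = (b(x:=y)) x * (\<Prod>j\<in>S-{x}. (b(x:=y)) j)"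
        by (rule prod.remove[OF fS xS])
      also have "(\<Prod>j\<in>S-{x}. (b(x:=y)) j) = (\<Prod>j\<in>S-{x}. b j)" by (intro prod.cong) auto
      finally show "c S * (\<Prod>j\<in>S. (b(x:=y)) j) = y * (c S * (\<Prod>j\<in>S-{x}. b j))" by simp
    qed
    also have "\<dots> = y * (\<Sum>S\<in>F1. c S * (\<Prod>j\<in>S-{x}. b j))" by (simp add: sum_distrib_left)
    also have "(\<Sum>S\<in>F1. c S * (\<Prod>j\<in>S-{x}. b j)) = Q1 b"
      unfolding Q1_def G_def sum.reindex[OF injG] o_def d_def
      by (intro sum.cong[OF refl]) (auto simp: F1_def insert_absorb)
    finally show ?thesis .
  qed
  have cardIns: "card (insert x V) = Suc (card V)" using insert.hyps by simp
  have eqZ: "card {a \<in> PiE (insert x V) (\<lambda>_. A). (\<Sum>S\<in>F. c S * (\<Prod>j\<in>S. a j)) = 0}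
      = (\<Sum>b\<in>PiE V (\<lambda>_. A). card {y\<in>A. Q0 b + y * Q1 b = 0})"
    using card_PiE_insert_filter[OF insert.hyps(1,2) assms(2)] key by simp
  have finP: "finite (PiE V (\<lambda>_. A))" using insert.hyps(1) assms(2) by (intro finite_PiE) auto
  have cardP: "card (PiE V (\<lambda>_. A)) = card A ^ card V" by (simp add: card_PiE insert.hyps(1))
  show ?case
  proof (cases "F1 = {}")
    case True
    then have F0F: "F0 = F" by (auto simp: F0_def F1_def)
    have "G = {}" using True by (simp add: G_def)
    then have Q1z: "Q1 b = 0" for b by (simp add: Q1_def)
    have "(\<Sum>b\<in>PiE V (\<lambda>_. A). card {y\<in>A. Q0 b + y * Q1 b = 0})
        = (\<Sum>b\<in>PiE V (\<lambda>_. A). if Q0 b = 0 then card A else 0)"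
      by (intro sum.cong[OF refl]) (simp add: Q1z)
    also have "\<dots> = card {b \<in> PiE V (\<lambda>_. A). Q0 b = 0} * card A"
      by (rule sum_if_const_card[OF finP])
    finally have cZ: "card {a \<in> PiE (insert x V) (\<lambda>_. A). (\<Sum>S\<in>F. c S * (\<Prod>j\<in>S. a j)) = 0}
       = card {b \<in> PiE V (\<lambda>_. A). Q0 b = 0} * card A" using eqZ by simp
    have IH: "card {b \<in> PiE V (\<lambda>_. A). Q0 b = 0} * card A \<le> r * card A ^ card V"
    proof -
      have "F \<subseteq> Pow V" using insert.prems(1) F0F by (auto simp: F0_def)
      then show ?thesis unfolding Q0_def F0F using insert.IH[of F r c] insert.prems by auto
    qed
    show ?thesis unfolding cZ cardIns
      using mult_right_mono[OF IH, of "card A"] by (simp add: mult.commute mult.left_commute)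
  next
    case False
    then obtain S0 where S0: "S0 \<in> F1" by auto
    then have "x \<in> S0" "S0 \<in> F" by (auto simp: F1_def)
    then have "card S0 \<ge> 1" using finS[of S0] by (metis One_nat_def Suc_leI card_gt_0_iff empty_iff)
    then have r1: "r \<ge> 1" using \<open>S0 \<in> F\<close> insert.prems(3) by (meson le_trans)
    have bound: "card {y\<in>A. Q0 b + y * Q1 b = 0} \<le> (if Q1 b = 0 then card A else 0) + 1" for b
    proof (cases "Q1 b = 0")
      case True
      have "card {y\<in>A. Q0 b + y * Q1 b = 0} \<le> card A" using assms(2) by (intro card_mono) auto
      then show ?thesis using True by simp
    next
      case False
      have "card {y\<in>A. Q0 b + y * Q1 b = 0} \<le> Suc 0"
        using assms(2) False
        by (subst card_le_Suc0_iff_eq) (auto, metis add_left_cancel mult_cancel_right)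
      then show ?thesis using False by simp
    qed
    have "(\<Sum>b\<in>PiE V (\<lambda>_. A). card {y\<in>A. Q0 b + y * Q1 b = 0})
        \<le> (\<Sum>b\<in>PiE V (\<lambda>_. A). (if Q1 b = 0 then card A else 0) + 1)"
      by (intro sum_mono bound)
    also have "\<dots> = card {b \<in> PiE V (\<lambda>_. A). Q1 b = 0} * card A + card A ^ card V"
      unfolding sum.distrib sum_if_const_card[OF finP] using cardP by simp
    finally have cZ: "card {a \<in> PiE (insert x V) (\<lambda>_. A). (\<Sum>S\<in>F. c S * (\<Prod>j\<in>S. a j)) = 0}
       \<le> card {b \<in> PiE V (\<lambda>_. A). Q1 b = 0} * card A + card A ^ card V" using eqZ by simp
    have GP: "G \<subseteq> Pow V" using insert.prems(1) by (auto simp: G_def F1_def)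
    have Gne: "G \<noteq> {}" using False by (simp add: G_def)
    have Gc: "\<forall>T\<in>G. card T \<le> r - 1"
    proof
      fix T assume "T \<in> G"
      then obtain S where S: "S \<in> F1" "T = S - {x}" by (auto simp: G_def)
      then have "card T = card S - 1" using finS by (auto simp: F1_def)
      then show "card T \<le> r - 1" using S insert.prems(3) by (auto simp: F1_def)
    qed
    have Gd: "\<forall>T\<in>G. d T \<noteq> 0"
    proof
      fix T assume "T \<in> G"
      then obtain S where S: "S \<in> F1" "T = S - {x}" by (auto simp: G_def)
      then have "insert x T = S" by (auto simp: F1_def)
      then show "d T \<noteq> 0" using S insert.prems(4) by (auto simp: d_def F1_def)
    qed
    have IH: "card {b \<in> PiE V (\<lambda>_. A). Q1 b = 0} * card A \<le> (r - 1) * card A ^ card V"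
      unfolding Q1_def using insert.IH[OF GP Gne Gc Gd] .
    define N where "N = card A ^ card V * card A"
    have "card {a \<in> PiE (insert x V) (\<lambda>_. A). (\<Sum>S\<in>F. c S * (\<Prod>j\<in>S. a j)) = 0} * card A
       \<le> (card {b \<in> PiE V (\<lambda>_. A). Q1 b = 0} * card A + card A ^ card V) * card A"
      by (rule mult_right_mono[OF cZ]) simp
    also have "\<dots> = card {b \<in> PiE V (\<lambda>_. A). Q1 b = 0} * card A * card A + N"
      by (simp add: N_def algebra_simps)
    also have "\<dots> \<le> (r - 1) * card A ^ card V * card A + N"
      using mult_right_mono[OF IH, of "card A"] by simp
    also have "\<dots> = r * N" using r1 by (simp add: N_def algebra_simps)
    also have "\<dots> = r * card A ^ card (insert x V)" by (simp add: N_def cardIns mult.commute)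
    finally show ?thesis .
  qed
qed

theorem proposition2:
  fixes M1 M2 :: "int mat" and r n d s :: nat and W :: "nat \<Rightarrow> nat \<Rightarrow> nat" and u :: "nat list"
  assumes "M1 \<in> carrier_mat r n" and "M2 \<in> carrier_mat r n"
    and "s \<ge> 1"
    and "u \<in> Wvec d W ` common_bases M1 M2"
  shows "real (card {a \<in> PiE {0..<n} (\<lambda>_. {1..int s}). g_eval M1 M2 d W u a = 0})
           / real s ^ n \<le> real r / real s"
proof -
  define F where "F = {S \<in> common_bases M1 M2. Wvec d W S = u}"
  define c where "c S = det (colsub M1 S) * det (colsub M2 S)" for S
  have dims: "dim_row M1 = r" "dim_col M1 = n" using assms(1) by auto
  have FP: "F \<subseteq> Pow {0..<n}" using dims by (auto simp: F_def common_bases_def)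
  have Fne: "F \<noteq> {}" using assms(4) by (auto simp: F_def)
  have Fc: "\<forall>S\<in>F. card S \<le> r" using dims by (auto simp: F_def common_bases_def)
  have Fd: "\<forall>S\<in>F. c S \<noteq> 0" by (auto simp: F_def common_bases_def c_def)
  have cA: "card {1..int s} = s" by simp
  have ge: "g_eval M1 M2 d W u a = (\<Sum>S\<in>F. c S * (\<Prod>j\<in>S. a j))" for a
    by (simp add: g_eval_def F_def c_def)
  have main: "card {a \<in> PiE {0..<n} (\<lambda>_. {1..int s}). g_eval M1 M2 d W u a = 0} * s \<le> r * s ^ n"
    using sz[of "{0..<n}" "{1..int s}" F r c, OF _ _ FP Fne Fc Fd] unfolding ge cA by simp
  define Z where "Z = card {a \<in> PiE {0..<n} (\<lambda>_. {1..int s}). g_eval M1 M2 d W u a = 0}"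
  have sp: "real s > 0" using assms(3) by simp
  have "real Z * real s \<le> real r * real s ^ n" using main unfolding Z_def[symmetric]
    by (metis of_nat_le_iff of_nat_mult of_nat_power)
  then have "real Z / real s ^ n \<le> real r / real s" using sp
    by (simp add: divide_simps mult.commute)
  then show ?thesis unfolding Z_def .
qed

end
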